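(* Every implication algebra $\mathfrak{A}=(A,\to)$ with $A$ finite has a finite representation, i.e. there is an injective map $h$ from $A$ into $\wp(\top)$ for some binary relation $\top\subseteq X\times X$ with $X$ finite, such that $h(a\to b)=(\top\setminus h(a))\cup h(b)$ for all $a,b\in A$.
   Context: An implication algebra is $(A,\to)$ satisfying, for all $a,b,c$: $(a\to b)\to a=a$; $(a\to b)\to b=(b\to a)\to a$; $a\to(b\to c)=b\to(a\to c)$. *)

theory Defs
  imports Main
begin

definition implication_algebra :: "'a set \<Rightarrow> ('a \<Rightarrow> 'a \<Rightarrow> 'a) \<Rightarrow> bool" where
  "implication_algebra A imp \<longleftrightarrow>
     (\<forall>a\<in>A. \<forall>b\<in>A. imp a b \<in> A) \<and>
     (\<forall>a\<in>A. \<forall>b\<in>A. imp (imp a b) a = a) \<and>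
     (\<forall>a\<in>A. \<forall>b\<in>A. imp (imp a b) b = imp (imp b a) a) \<and>
     (\<forall>a\<in>A. \<forall>b\<in>A. \<forall>c\<in>A. imp a (imp b c) = imp b (imp a c))"

definition has_finite_representation :: "'a set \<Rightarrow> ('a \<Rightarrow> 'a \<Rightarrow> 'a) \<Rightarrow> bool" where
  "has_finite_representation A imp \<longleftrightarrow>
     (\<exists>(X :: nat set) (T :: (nat \<times> nat) set) (h :: 'a \<Rightarrow> (nat \<times> nat) set).
        finite X \<and> T \<subseteq> X \<times> X \<and> inj_on h A \<and> (\<forall>a\<in>A. h a \<subseteq> T) \<and>
        (\<forall>a\<in>A. \<forall>b\<in>A. h (imp a b) = (T - h a) \<union> h b))"

end

theory Submission
  imports Defs
begin

locale ia = fixes A and imp 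
  assumes cl: "a\<in>A \<Longrightarrow> b\<in>A \<Longrightarrow> imp a b \<in> A"
  and ax1: "a\<in>A \<Longrightarrow> b\<in>A \<Longrightarrow> imp (imp a b) a = a"
  and ax2: "a\<in>A \<Longrightarrow> b\<in>A \<Longrightarrow> imp (imp a b) b = imp (imp b a) a"
  and ax3: "a\<in>A \<Longrightarrow> b\<in>A \<Longrightarrow> c\<in>A \<Longrightarrow> imp a (imp b c) = imp b (imp a c)"
begin
lemma L5: "x\<in>A \<Longrightarrow> y\<in>A \<Longrightarrow> imp x (imp x y) = imp x y"
  by (metis ax1 cl)
lemma star: "x\<in>A \<Longrightarrow> y\<in>A \<Longrightarrow> imp x x = imp (imp x y) (imp x y)"
proof -
  assume h: "x\<in>A" "y\<in>A"
  have "imp x x = imp (imp (imp x y) x) x" using h ax1 by simp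
  also have "\<dots> = imp (imp x (imp x y)) (imp x y)" using h ax2[of "imp x y" x] cl by simp
  also have "\<dots> = imp (imp x y) (imp x y)" using h L5 by simp
  finally show ?thesis .
qed
lemma L3: "x\<in>A \<Longrightarrow> y\<in>A \<Longrightarrow> imp y (imp x x) = imp x x"
  by (smt (verit, ccfv_threshold) L5 ax3 cl star)
lemma L1: "x\<in>A \<Longrightarrow> y\<in>A \<Longrightarrow> imp x x = imp y y"
proof -
  assume h: "x\<in>A" "y\<in>A"
  have xx: "imp x x \<in> A" "imp y y \<in> A" using h cl by auto
  have 1: "imp (imp y y) (imp x x) = imp x x" using L3[of x "imp y y"] h xx by simp
  have 2: "imp (imp x x) (imp y y) = imp y y" using L3[of y "imp x x"] h xx by simp
  have "imp x x = imp (imp x x) (imp x x)" using L3[of x "imp x x"] h xx by simp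
  also have "\<dots> = imp (imp (imp y y) (imp x x)) (imp x x)" using 1 by simp
  also have "\<dots> = imp (imp (imp x x) (imp y y)) (imp y y)" using ax2[of "imp y y" "imp x x"] xx by simp
  also have "\<dots> = imp (imp y y) (imp y y)" using 2 by simp
  also have "\<dots> = imp y y" using L3[of y "imp y y"] h xx by simp
  finally show ?thesis .
qed
lemma L4: "x\<in>A \<Longrightarrow> y\<in>A \<Longrightarrow> imp x (imp y x) = imp x x"
  using ax3[of x y x] L3[of x y] by simp
lemma L2: "x\<in>A \<Longrightarrow> y\<in>A \<Longrightarrow> imp (imp y y) x = x"
  using L1[of x y] ax1[of x x] by simp
lemma antisym: "x\<in>A \<Longrightarrow> y\<in>A \<Longrightarrow> imp x y = imp x x \<Longrightarrow> imp y x = imp x x \<Longrightarrow> x = y"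
  by (metis L1 L2 ax2)
lemma leimp: "x\<in>A \<Longrightarrow> y\<in>A \<Longrightarrow> imp y (imp x y) = imp x x"
  by (metis L1 L3 ax3)
lemma trans: "x\<in>A \<Longrightarrow> y\<in>A \<Longrightarrow> z\<in>A \<Longrightarrow> imp x y = imp x x \<Longrightarrow> imp y z = imp x x \<Longrightarrow> imp x z = imp x x"
proof -
  assume h: "x\<in>A" "y\<in>A" "z\<in>A" "imp x y = imp x x" "imp y z = imp x x"
  have "z = imp (imp z y) y" using h by (metis L1 L2 ax2)
  then have "imp x z = imp (imp z y) (imp x y)" using h by (metis ax3 cl)
  also have "\<dots> = imp x x" using h by (metis L1 L3 cl)
  finally show ?thesis .
qed
lemma mono2: "x\<in>A \<Longrightarrow> y\<in>A \<Longrightarrow> z\<in>A \<Longrightarrow> imp x y = imp x x \<Longrightarrow> imp (imp z x) (imp z y) = imp x x"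
proof -
  assume h: "x\<in>A" "y\<in>A" "z\<in>A" "imp x y = imp x x"
  have "y = imp (imp y x) x" using h by (metis L1 L2 ax2)
  then have "imp (imp z x) (imp z y) = imp (imp z x) (imp (imp y x) (imp z x))" using h by (metis ax3 cl)
  also have "\<dots> = imp x x" using h by (metis L1 L4 cl)
  finally show ?thesis .
qed
lemma anti: "a\<in>A \<Longrightarrow> b\<in>A \<Longrightarrow> c\<in>A \<Longrightarrow> imp a b = imp a a \<Longrightarrow> imp (imp b c) (imp a c) = imp a a"
proof -
  assume h: "a\<in>A" "b\<in>A" "c\<in>A" "imp a b = imp a a"
  have "imp b (imp (imp b c) c) = imp (imp b c) (imp b c)" using h ax3[of b "imp b c" c] cl by simp
  also have "\<dots> = imp a a" using h L1[of "imp b c" a] cl by simp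
  finally have "imp b (imp (imp b c) c) = imp a a" .
  then have "imp a (imp (imp b c) c) = imp a a" using h trans[of a b "imp (imp b c) c"] cl by simp
  then show ?thesis using h ax3[of a "imp b c" c] cl by simp
qed
lemma T3: "b\<in>A \<Longrightarrow> m\<in>A \<Longrightarrow> imp (imp (imp b m) m) m = imp b m"
proof -
  assume h: "b\<in>A" "m\<in>A"
  have 1: "imp b (imp (imp b m) m) = imp b b" using h by (metis L1 ax3 cl)
  have "imp (imp (imp (imp b m) m) m) (imp b m) = imp b b" using anti[OF h(1) _ h(2) 1] h by (metis cl)
  moreover have "imp (imp b m) (imp (imp (imp b m) m) m) = imp b b" using h by (metis L1 ax3 cl)
  ultimately show ?thesis using h antisym[of "imp (imp (imp b m) m) m" "imp b m"] L1[of b "imp (imp (imp b m) m) m"] cl by simp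
qed
lemma lub: "x\<in>A \<Longrightarrow> m\<in>A \<Longrightarrow> w\<in>A \<Longrightarrow> imp x w = imp x x \<Longrightarrow> imp m w = imp x x \<Longrightarrow> imp (imp (imp m x) x) w = imp x x"
proof -
  assume h: "x\<in>A" "m\<in>A" "w\<in>A" "imp x w = imp x x" "imp m w = imp x x"
  have "w = imp (imp w m) m" using h by (metis L1 L2 ax2)
  then have "imp (imp (imp m x) x) w = imp (imp w m) (imp (imp (imp m x) x) m)" using h by (metis ax3 cl)
  also have "imp (imp (imp m x) x) m = imp x m" using h T3[of x m] ax2[of m x] by simp
  also have "imp (imp w m) (imp x m) = imp x x" using anti[of x w m] h by simp
  finally show ?thesis .
qed

context fixes e assumes eA: "e \<in> A"
begin
definition "ONE = imp e e"
definition "le x y \<longleftrightarrow> imp x y = ONE"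
lemma xx[simp]: "x\<in>A \<Longrightarrow> imp x x = ONE" unfolding ONE_def using L1 eA by blast
lemma ONEA: "ONE \<in> A" unfolding ONE_def using cl eA by blast
lemma le_refl: "x\<in>A \<Longrightarrow> le x x" by (simp add: le_def)
lemma le_antisym: "x\<in>A \<Longrightarrow> y\<in>A \<Longrightarrow> le x y \<Longrightarrow> le y x \<Longrightarrow> x = y"
  unfolding le_def using antisym by simp
lemma le_trans: "x\<in>A \<Longrightarrow> y\<in>A \<Longrightarrow> z\<in>A \<Longrightarrow> le x y \<Longrightarrow> le y z \<Longrightarrow> le x z"
  unfolding le_def using trans[of x y z] by simp
lemma le_imp: "x\<in>A \<Longrightarrow> y\<in>A \<Longrightarrow> le y (imp x y)"
  unfolding le_def using leimp[of x y] by simp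
lemma le_mono2: "x\<in>A \<Longrightarrow> y\<in>A \<Longrightarrow> z\<in>A \<Longrightarrow> le x y \<Longrightarrow> le (imp z x) (imp z y)"
  unfolding le_def using mono2[of x y z] by simp
lemma le_lub: "x\<in>A \<Longrightarrow> m\<in>A \<Longrightarrow> w\<in>A \<Longrightarrow> le x w \<Longrightarrow> le m w \<Longrightarrow> le (imp (imp m x) x) w"
  unfolding le_def using lub[of x m w] by simp
lemma le_join: "x\<in>A \<Longrightarrow> m\<in>A \<Longrightarrow> le m (imp (imp m x) x)"
  unfolding le_def using ax3[of m "imp m x" x] cl by simp
lemma le_exch: "x\<in>A \<Longrightarrow> y\<in>A \<Longrightarrow> z\<in>A \<Longrightarrow> le x (imp y z) \<longleftrightarrow> le y (imp x z)"
  unfolding le_def using ax3[of x y z] by simp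
lemma le_ONE: "x\<in>A \<Longrightarrow> le x ONE"
  unfolding le_def ONE_def using L3[of e x] eA by simp
lemma ONE_le: "x\<in>A \<Longrightarrow> le ONE x \<Longrightarrow> x = ONE"
  using le_antisym le_ONE ONEA by blast

lemma key:
  assumes aA: "a\<in>A" and mA: "m\<in>A" and nam: "\<not> le a m"
    and mx: "\<forall>z\<in>A. le m z \<longrightarrow> z \<noteq> m \<longrightarrow> le a z"
    and xA: "x\<in>A" and yA: "y\<in>A"
  shows "le (imp x y) m \<longleftrightarrow> (\<not> le x m \<and> le y m)"
proof
  assume h: "le (imp x y) m"
  have "le y m" using le_trans[OF yA _ mA le_imp[OF xA yA] h] cl xA yA by blast
  moreover have "\<not> le x m"
  proof
    assume "le x m"
    then have "le (imp (imp x (imp x y)) (imp x y)) m"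
      using le_lub[of "imp x y" x m] h cl xA yA mA by blast
    then have "le ONE m" using L5[OF xA yA] cl xA yA by simp
    then have "m = ONE" using ONE_le mA by blast
    then show False using nam le_ONE aA by simp
  qed
  ultimately show "\<not> le x m \<and> le y m" by blast
next
  assume h: "\<not> le x m \<and> le y m"
  have xmA: "imp x m \<in> A" using cl xA mA by blast
  have jA: "imp (imp m x) x \<in> A" using cl xA mA by blast
  have amA: "imp a m \<in> A" using cl aA mA by blast
  have eq: "imp x m = m"
  proof (rule ccontr)
    assume ne: "imp x m \<noteq> m"
    have 1: "le a (imp x m)" using mx le_imp[OF xA mA] xmA ne by blast
    have "imp (imp m x) x \<noteq> m" using le_imp[of "imp m x" x] h cl xA mA by force
    then have 2: "le a (imp (imp m x) x)" using mx le_join[OF xA mA] jA by blast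
    have 3: "le x (imp a m)" using 1 le_exch aA xA mA by blast
    have 4: "le m (imp a m)" using le_imp aA mA by blast
    have "le (imp (imp m x) x) (imp a m)" using le_lub[OF xA mA amA 3 4] .
    then have "le a (imp a m)" using le_trans[OF aA jA amA 2] by blast
    then have "le a m" using L5[OF aA mA] unfolding le_def by simp
    then show False using nam by blast
  qed
  have "le (imp x y) (imp x m)" using le_mono2[OF yA mA xA] h by blast
  then show "le (imp x y) m" using eq by simp
qed

definition "PP = {m\<in>A. \<forall>x\<in>A. \<forall>y\<in>A. le (imp x y) m \<longleftrightarrow> (\<not> le x m \<and> le y m)}"
definition "hh x = {m\<in>PP. \<not> le x m}"

lemma hh_sub: "hh x \<subseteq> PP" unfolding hh_def by blast
lemma PP_sub: "PP \<subseteq> A" unfolding PP_def by blast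
lemma hh_hom: "a\<in>A \<Longrightarrow> b\<in>A \<Longrightarrow> hh (imp a b) = (PP - hh a) \<union> hh b"
  unfolding hh_def PP_def by blast

lemma hh_sep:
  assumes fin: "finite A" and aA: "a\<in>A" and bA: "b\<in>A" and nab: "\<not> le a b"
  shows "\<exists>m\<in>PP. \<not> le a m \<and> le b m"
proof -
  let ?S = "{z\<in>A. le b z \<and> \<not> le a z}"
  let ?u = "\<lambda>z. card {w\<in>A. le z w}"
  have "b \<in> ?S" using bA nab le_refl by blast
  then obtain m where mS: "m \<in> ?S" and mmin: "\<And>z. z \<in> ?S \<Longrightarrow> ?u m \<le> ?u z"
    using ex_has_least_nat[of "\<lambda>z. z \<in> ?S" b ?u] by blast
  have mA: "m \<in> A" using mS by blast
  have mx: "\<forall>z\<in>A. le m z \<longrightarrow> z \<noteq> m \<longrightarrow> le a z"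
  proof (intro ballI impI, rule ccontr)
    fix z assume zA: "z\<in>A" and mz: "le m z" and zm: "z \<noteq> m" and naz: "\<not> le a z"
    have "le b z" using le_trans[OF bA mA zA] mS mz by blast
    then have zS: "z \<in> ?S" using zA naz by blast
    have sub: "{w\<in>A. le z w} \<subset> {w\<in>A. le m w}"
    proof
      show "{w\<in>A. le z w} \<subseteq> {w\<in>A. le m w}" using le_trans[OF mA zA] mz by blast
      have "m \<notin> {w\<in>A. le z w}" using le_antisym[OF zA mA] mz zm by blast
      moreover have "m \<in> {w\<in>A. le m w}" using mA le_refl by blast
      ultimately show "{w\<in>A. le z w} \<noteq> {w\<in>A. le m w}" by blast
    qed
    have "?u z < ?u m" using psubset_card_mono[OF _ sub] fin by simp
    then show False using mmin[OF zS] by simp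
  qed
  have "m \<in> PP" unfolding PP_def using key[OF aA mA _ mx] mS by blast
  then show ?thesis using mS by blast
qed

lemma hh_inj: "finite A \<Longrightarrow> inj_on hh A"
proof (rule inj_onI)
  fix a b assume fin: "finite A" and aA: "a\<in>A" and bA: "b\<in>A" and eq: "hh a = hh b"
  show "a = b"
  proof (rule ccontr)
    assume "a \<noteq> b"
    then have "\<not> le a b \<or> \<not> le b a" using le_antisym aA bA by blast
    then show False
    proof
      assume "\<not> le a b"
      then obtain m where "m\<in>PP" "\<not> le a m" "le b m" using hh_sep fin aA bA by blast
      then have "m \<in> hh a" "m \<notin> hh b" unfolding hh_def by auto
      then show False using eq by blast
    next
      assume "\<not> le b a"
      then obtain m where "m\<in>PP" "\<not> le b m" "le a m" using hh_sep fin aA bA by blast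
      then have "m \<in> hh b" "m \<notin> hh a" unfolding hh_def by auto
      then show False using eq by blast
    qed
  qed
qed
end
end

theorem corollary4:
  fixes A :: "'a set" and imp :: "'a \<Rightarrow> 'a \<Rightarrow> 'a"
  assumes "implication_algebra A imp" and "finite A"
  shows "has_finite_representation A imp"
proof (cases "A = {}")
  case True
  show ?thesis unfolding has_finite_representation_def
    by (rule exI[of _ "{}"], rule exI[of _ "{}"], rule exI[of _ "\<lambda>_. {}"]) (simp only: True, simp)
next
  case False
  then obtain e where eA: "e \<in> A" by blast
  interpret ia A imp
    using assms(1) unfolding implication_algebra_def by unfold_locales blast+
  obtain f :: "'a \<Rightarrow> nat" and n where f: "f ` A = {i. i < n}" "inj_on f A"
    using finite_imp_inj_to_nat_seg[OF assms(2)] by blast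
  define g where "g = (\<lambda>m. (f m, f m))"
  have ginj: "inj_on g A" using f(2) unfolding g_def inj_on_def by auto
  let ?P = "PP e"
  let ?h = "\<lambda>x. g ` hh e x"
  have PA: "?P \<subseteq> A" using PP_sub[OF eA] .
  have hP: "\<And>x. hh e x \<subseteq> ?P" using hh_sub[OF eA] .
  show ?thesis unfolding has_finite_representation_def
  proof (intro exI conjI)
    show "finite (f ` A)" using assms(2) by simp
    show "g ` ?P \<subseteq> f ` A \<times> f ` A" using PA unfolding g_def by auto
    show "inj_on ?h A"
    proof (rule inj_onI)
      fix a b assume aA: "a \<in> A" and bA: "b \<in> A" and eq: "?h a = ?h b"
      have s1: "hh e a \<subseteq> A" using hP[of a] PA by (rule subset_trans)
      have s2: "hh e b \<subseteq> A" using hP[of b] PA by (rule subset_trans)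
      have "hh e a = hh e b" using eq inj_on_image_eq_iff[OF ginj s1 s2] by simp
      then show "a = b" using inj_onD[OF hh_inj[OF eA assms(2)] _ aA bA] by simp
    qed
    show "\<forall>a\<in>A. ?h a \<subseteq> g ` ?P" using hP by blast
    show "\<forall>a\<in>A. \<forall>b\<in>A. ?h (imp a b) = (g ` ?P - ?h a) \<union> ?h b"
    proof (intro ballI)
      fix a b assume aA: "a \<in> A" and bA: "b \<in> A"
      have d: "g ` (?P - hh e a) = g ` ?P - ?h a"
        by (rule inj_on_image_set_diff[OF ginj]) (use PA hP[of a] in blast)+
      have "?h (imp a b) = g ` ((?P - hh e a) \<union> hh e b)" using hh_hom[OF eA aA bA] by simp
      also have "\<dots> = g ` (?P - hh e a) \<union> ?h b" by (rule image_Un)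
      also have "\<dots> = (g ` ?P - ?h a) \<union> ?h b" using d by simp
      finally show "?h (imp a b) = (g ` ?P - ?h a) \<union> ?h b" .
    qed
  qed
qed

end
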